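(* Let $\{x_t\}_{t\ge0}$ be an aperiodic and $\varphi$-irreducible Markov chain on $\mathbb{X}$ with transition kernel $P$, and let $\{\mathcal{T}_n\}_{n\ge0}$ be a non-decreasing sequence of random times with $\mathcal{T}_0=0$ that is independent of $\{x_t\}$. Then any set $C$ that is small for $\{x_t\}$ is petite for the sampled process $\{x_{\mathcal{T}_n}\}$.
   Context: A set $C$ of positive maximal-irreducibility measure is $(m,\delta,\nu)$-small for $\{x_t\}$ if $P^m(x,B)\ge\delta\nu(B)$ for all $x\in C$ and Borel $B$, for some $m\ge1$, $\delta\in(0,1)$ and positive measure $\nu$. A set is petite for a process with one-step transition kernel $Q$ if $\sum_{n\ge0}a(n)Q^n(x,B)\ge\kappa(B)$ for all $x\in C$ and Borel $B$, for some probability distribution $a$ on $\mathbb{Z}_+$ and nonzero positive measure $\kappa$; for the sampled process the relevant kernel is $x\mapsto P^{\mathcal{T}_1}(x,\cdot)=\sum_k P(\mathcal{T}_1=k)P^k(x,\cdot)$. *)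

theory Defs
  imports "HOL-Probability.Probability"
begin

text \<open>Markov kernels are measure-valued maps P :: 'a => 'a measure, assumed to be
  measurable maps M ->M prob_algebra M. The n-step kernel P^n.\<close>

fun kpow :: "'a measure \<Rightarrow> ('a \<Rightarrow> 'a measure) \<Rightarrow> nat \<Rightarrow> 'a \<Rightarrow> 'a measure" where
  "kpow M K 0 x = return M x"
| "kpow M K (Suc n) x = K x \<bind> (\<lambda>y. kpow M K n y)"

definition irreducibility_measure :: "'a measure \<Rightarrow> ('a \<Rightarrow> 'a measure) \<Rightarrow> 'a measure \<Rightarrow> bool" where
  "irreducibility_measure M P \<phi> \<longleftrightarrow>
     sets \<phi> = sets M \<and> sigma_finite_measure \<phi> \<and> emeasure \<phi> (space M) > 0 \<and>
     (\<forall>B\<in>sets M. emeasure \<phi> B > 0 \<longrightarrow>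
        (\<forall>x\<in>space M. \<exists>n\<ge>1. emeasure (kpow M P n x) B > 0))"

definition phi_irreducible :: "'a measure \<Rightarrow> ('a \<Rightarrow> 'a measure) \<Rightarrow> 'a measure \<Rightarrow> bool" where
  "phi_irreducible M P \<phi> \<longleftrightarrow> irreducibility_measure M P \<phi>"

definition maximal_irreducibility_measure :: "'a measure \<Rightarrow> ('a \<Rightarrow> 'a measure) \<Rightarrow> 'a measure \<Rightarrow> bool" where
  "maximal_irreducibility_measure M P \<psi> \<longleftrightarrow>
     irreducibility_measure M P \<psi> \<and>
     (\<forall>\<phi>. irreducibility_measure M P \<phi> \<longrightarrow> absolutely_continuous \<psi> \<phi>)"

definition d_cycle :: "'a measure \<Rightarrow> ('a \<Rightarrow> 'a measure) \<Rightarrow> nat \<Rightarrow> (nat \<Rightarrow> 'a set) \<Rightarrow> bool" where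
  "d_cycle M P d D \<longleftrightarrow> d \<ge> 1 \<and>
     (\<forall>i<d. D i \<in> sets M) \<and>
     (\<forall>i<d. \<forall>j<d. i \<noteq> j \<longrightarrow> D i \<inter> D j = {}) \<and>
     (\<forall>i<d. \<forall>x\<in>D i. emeasure (P x) (D (Suc i mod d)) = 1) \<and>
     (\<exists>\<psi>. maximal_irreducibility_measure M P \<psi> \<and>
        emeasure \<psi> (space M - (\<Union>i<d. D i)) = 0)"

definition aperiodic :: "'a measure \<Rightarrow> ('a \<Rightarrow> 'a measure) \<Rightarrow> bool" where
  "aperiodic M P \<longleftrightarrow> (\<forall>d D. d_cycle M P d D \<longrightarrow> d = 1)"

definition small_set :: "'a measure \<Rightarrow> ('a \<Rightarrow> 'a measure) \<Rightarrow> 'a set \<Rightarrow> bool" where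
  "small_set M P C \<longleftrightarrow> C \<in> sets M \<and>
     (\<exists>\<psi>. maximal_irreducibility_measure M P \<psi> \<and> emeasure \<psi> C > 0) \<and>
     (\<exists>m::nat. \<exists>\<delta>::real. \<exists>\<nu>. m \<ge> 1 \<and> 0 < \<delta> \<and> \<delta> < 1 \<and>
        sets \<nu> = sets M \<and> emeasure \<nu> (space M) > 0 \<and>
        (\<forall>x\<in>C. \<forall>B\<in>sets M. emeasure (kpow M P m x) B \<ge> ennreal \<delta> * emeasure \<nu> B))"

definition petite_set :: "'a measure \<Rightarrow> ('a \<Rightarrow> 'a measure) \<Rightarrow> 'a set \<Rightarrow> bool" where
  "petite_set M Q C \<longleftrightarrow> C \<in> sets M \<and>
     (\<exists>a::nat pmf. \<exists>\<kappa>. sets \<kappa> = sets M \<and> emeasure \<kappa> (space M) > 0 \<and>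
        (\<forall>x\<in>C. \<forall>B\<in>sets M.
           (\<Sum>n. ennreal (pmf a n) * emeasure (kpow M Q n x) B) \<ge> emeasure \<kappa> B))"

text \<open>One-step kernel of the sampled process x_{T_n}: x |-> sum_k P(T_1 = k) P^k(x,.),
  where tau is the law of T_1.\<close>
definition sampled_kernel :: "'a measure \<Rightarrow> ('a \<Rightarrow> 'a measure) \<Rightarrow> nat pmf \<Rightarrow> 'a \<Rightarrow> 'a measure" where
  "sampled_kernel M P \<tau> x = measure_pmf \<tau> \<bind> (\<lambda>k. kpow M P k x)"

end

theory Submission
  imports Defs
begin

lemma int_mono:
  assumes "sets \<mu> = sets \<nu>" "\<And>A. A\<in>sets \<nu> \<Longrightarrow> c * emeasure \<nu> A \<le> emeasure \<mu> A"
    "f \<in> borel_measurable \<nu>"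
  shows "c * (\<integral>\<^sup>+x. f x \<partial>\<nu>) \<le> (\<integral>\<^sup>+x. f x \<partial>\<mu>)"
proof -
  have le: "emeasure (scale_measure c \<nu>) \<le> emeasure \<mu>"
  proof (rule le_funI)
    fix A show "emeasure (scale_measure c \<nu>) A \<le> emeasure \<mu> A"
      using assms(1,2) by (cases "A \<in> sets \<nu>") (auto simp: emeasure_notin_sets)
  qed
  have "scale_measure c \<nu> \<le> \<mu>"
    unfolding le_measure_iff using assms(1) sets_eq_imp_space_eq[OF assms(1)] le
    by (simp add: space_scale_measure)
  then have "nn_integral (scale_measure c \<nu>) f \<le> nn_integral \<mu> f"
    using assms(1) by (intro nn_integral_mono_measure) auto
  then show ?thesis using nn_integral_scale_measure[OF assms(3)] by simp
qed

lemma kpow_Suc_fun: "kpow M P (Suc n) = (\<lambda>x. P x \<bind> kpow M P n)"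
  by (rule ext) simp

lemma kpow_meas:
  assumes "P \<in> M \<rightarrow>\<^sub>M subprob_algebra M"
  shows "kpow M P n \<in> M \<rightarrow>\<^sub>M subprob_algebra M"
proof (induction n)
  case 0
  have "kpow M P 0 = return M" by (rule ext) simp
  then show ?case by simp
next
  case (Suc n)
  show ?case unfolding kpow_Suc_fun by (rule measurable_bind2[OF assms Suc])
qed

lemma kernel_sets:
  assumes "K \<in> M \<rightarrow>\<^sub>M subprob_algebra N" "x \<in> space M"
  shows "sets (K x) = sets N" "space (K x) = space N" "subprob_space (K x)"
proof -
  have m: "K x \<in> space (subprob_algebra N)" by (rule measurable_space[OF assms])
  show s: "sets (K x) = sets N" using m by (simp add: space_subprob_algebra)
  show "space (K x) = space N" by (rule sets_eq_imp_space_eq[OF s])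
  show "subprob_space (K x)" using m by (simp add: space_subprob_algebra)
qed

lemma meas_sets: assumes "f \<in> M \<rightarrow>\<^sub>M N" "sets A = sets M" shows "f \<in> A \<rightarrow>\<^sub>M N"
proof -
  have "measurable M N = measurable A N" by (rule measurable_cong_sets) (use assms(2) in auto)
  then show ?thesis using assms(1) by simp
qed

lemma kpow_add:
  assumes K: "P \<in> M \<rightarrow>\<^sub>M subprob_algebra M"
  shows "x \<in> space M \<Longrightarrow> kpow M P (a + b) x = kpow M P a x \<bind> kpow M P b"
proof (induction a arbitrary: x)
  case 0
  then show ?case using bind_return[OF kpow_meas[OF K] 0] by simp
next
  case (Suc a)
  have "kpow M P (Suc a + b) x = P x \<bind> (\<lambda>y. kpow M P a y \<bind> kpow M P b)"
    using Suc.IH kernel_sets(2)[OF K Suc.prems] by (auto intro!: bind_cong_All)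
  also have "\<dots> = (P x \<bind> kpow M P a) \<bind> kpow M P b"
    by (rule bind_assoc[OF meas_sets[OF kpow_meas[OF K] kernel_sets(1)[OF K Suc.prems]] kpow_meas[OF K], symmetric])
  finally show ?case by simp
qed

lemma kpow_prob:
  assumes K: "P \<in> M \<rightarrow>\<^sub>M prob_algebra M"
  shows "y \<in> space M \<Longrightarrow> emeasure (kpow M P n y) (space M) = 1"
proof (induction n arbitrary: y)
  case 0
  then show ?case by simp
next
  case (Suc n)
  have K': "P \<in> M \<rightarrow>\<^sub>M subprob_algebra M" using K by (rule measurable_prob_algebraD)
  have ps: "prob_space (P y)" "sets (P y) = sets M"
    using measurable_space[OF K Suc.prems] by (auto simp: space_prob_algebra)
  have sp: "space (P y) = space M" using ps(2) by (rule sets_eq_imp_space_eq)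
  have "emeasure (kpow M P (Suc n) y) (space M) = (\<integral>\<^sup>+z. emeasure (kpow M P n z) (space M) \<partial>P y)"
    unfolding kpow.simps
    by (rule emeasure_bind[OF _ meas_sets[OF kpow_meas[OF K'] ps(2)] sets.top]) (use sp Suc.prems in auto)
  also have "\<dots> = (\<integral>\<^sup>+z. 1 \<partial>P y)"
    using Suc.IH sp by (intro nn_integral_cong) auto
  also have "\<dots> = emeasure (P y) (space (P y))" by simp
  also have "\<dots> = 1" by (rule prob_space.emeasure_space_1[OF ps(1)])
  finally show ?case .
qed

lemma sampled_meas:
  assumes K: "P \<in> M \<rightarrow>\<^sub>M subprob_algebra M"
  shows "sampled_kernel M P \<tau> \<in> M \<rightarrow>\<^sub>M subprob_algebra M"
proof -
  have g: "(\<lambda>p. kpow M P (snd p) (fst p)) \<in> M \<Otimes>\<^sub>M count_space UNIV \<rightarrow>\<^sub>M subprob_algebra M"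
    by (rule measurable_compose_countable[where f="\<lambda>i p. kpow M P i (fst p)"])
       (auto intro: measurable_compose[OF measurable_fst kpow_meas[OF K]])
  have "(\<lambda>x. measure_pmf \<tau> \<bind> (\<lambda>k. kpow M P k x)) \<in> M \<rightarrow>\<^sub>M subprob_algebra M"
    by (rule measurable_bind'[where N="count_space UNIV"])
       (use g in \<open>auto simp: measure_pmf_in_subprob_algebra\<close>)
  then show ?thesis unfolding sampled_kernel_def[abs_def] .
qed

lemma sampled_emeasure:
  assumes K: "P \<in> M \<rightarrow>\<^sub>M subprob_algebra M" and B: "B \<in> sets M" and x: "x \<in> space M"
  shows "emeasure (sampled_kernel M P \<tau> x) B = (\<integral>\<^sup>+k. emeasure (kpow M P k x) B \<partial>measure_pmf \<tau>)"
  unfolding sampled_kernel_def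
proof (rule emeasure_bind[OF _ _ B])
  show "space (measure_pmf \<tau>) \<noteq> {}" by simp
  show "(\<lambda>k. kpow M P k x) \<in> measure_pmf \<tau> \<rightarrow>\<^sub>M subprob_algebra M"
    using measurable_space[OF kpow_meas[OF K] x] by simp
qed

lemma sampled_ge:
  assumes K: "P \<in> M \<rightarrow>\<^sub>M subprob_algebra M" and B: "B \<in> sets M" and x: "x \<in> space M"
  shows "ennreal (pmf \<tau> k0) * emeasure (kpow M P k0 x) B \<le> emeasure (sampled_kernel M P \<tau> x) B"
proof -
  have "ennreal (pmf \<tau> k0) * emeasure (kpow M P k0 x) B = (\<Sum>k\<in>{k0}. ennreal (pmf \<tau> k) * emeasure (kpow M P k x) B)"
    by simp
  also have "\<dots> \<le> (\<Sum>k. ennreal (pmf \<tau> k) * emeasure (kpow M P k x) B)"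
    by (rule sum_le_suminf) (auto intro: summableI)
  also have "\<dots> = emeasure (sampled_kernel M P \<tau> x) B"
    by (simp add: sampled_emeasure[OF K B x] nn_integral_measure_pmf nn_integral_count_space_nat)
  finally show ?thesis .
qed

lemma iter_ge:
  assumes K: "P \<in> M \<rightarrow>\<^sub>M subprob_algebra M"
  shows "x \<in> space M \<Longrightarrow> B \<in> sets M \<Longrightarrow>
    ennreal (pmf \<tau> k0) ^ n * emeasure (kpow M P (n * k0) x) B \<le> emeasure (kpow M (sampled_kernel M P \<tau>) n x) B"
proof (induction n arbitrary: x)
  case 0
  then show ?case by simp
next
  case (Suc n)
  let ?Q = "sampled_kernel M P \<tau>"
  let ?c = "ennreal (pmf \<tau> k0)"
  have QK: "?Q \<in> M \<rightarrow>\<^sub>M subprob_algebra M" by (rule sampled_meas[OF K])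
  have sQ: "sets (?Q x) = sets M" "space (?Q x) = space M" using kernel_sets[OF QK Suc.prems(1)] by auto
  have sP: "sets (kpow M P k0 x) = sets M" "space (kpow M P k0 x) = space M"
    using kernel_sets[OF kpow_meas[OF K] Suc.prems(1)] by auto
  have e: "(\<lambda>y. emeasure (kpow M P (n*k0) y) B) \<in> borel_measurable M"
    by (rule measurable_compose[OF kpow_meas[OF K] measurable_emeasure_subprob_algebra[OF Suc.prems(2)]])
  have e2: "(\<lambda>y. ?c ^ n * emeasure (kpow M P (n * k0) y) B) \<in> borel_measurable M"
    using e by measurable
  have fm0: "(\<lambda>y. emeasure (kpow M P (n*k0) y) B) \<in> borel_measurable (kpow M P k0 x)"
    by (rule meas_sets[OF e sP(1)])
  have fm: "(\<lambda>y. ?c ^ n * emeasure (kpow M P (n * k0) y) B) \<in> borel_measurable (kpow M P k0 x)"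
    by (rule meas_sets[OF e2 sP(1)])
  have "?c ^ Suc n * emeasure (kpow M P (Suc n * k0) x) B
      = ?c * (?c ^ n * emeasure (kpow M P k0 x \<bind> kpow M P (n * k0)) B)"
    using kpow_add[OF K Suc.prems(1), of k0 "n * k0"] by (simp add: mult.assoc)
  also have "\<dots> = ?c * (?c ^ n * (\<integral>\<^sup>+y. emeasure (kpow M P (n * k0) y) B \<partial>kpow M P k0 x))"
    by (subst emeasure_bind[OF _ meas_sets[OF kpow_meas[OF K] sP(1)] Suc.prems(2)])
       (use sP(2) Suc.prems(1) in auto)
  also have "\<dots> = ?c * (\<integral>\<^sup>+y. ?c ^ n * emeasure (kpow M P (n * k0) y) B \<partial>kpow M P k0 x)"
    by (subst nn_integral_cmult) (use fm0 in auto)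
  also have "\<dots> \<le> (\<integral>\<^sup>+y. ?c ^ n * emeasure (kpow M P (n * k0) y) B \<partial>?Q x)"
    by (rule int_mono[OF _ _ fm]) (use sQ sP sampled_ge[OF K _ Suc.prems(1)] in auto)
  also have "\<dots> \<le> (\<integral>\<^sup>+y. emeasure (kpow M ?Q n y) B \<partial>?Q x)"
    by (rule nn_integral_mono) (use Suc.IH Suc.prems(2) sQ in auto)
  also have "\<dots> = emeasure (kpow M ?Q (Suc n) x) B"
    by (simp only: kpow.simps, rule emeasure_bind[symmetric, OF _ meas_sets[OF kpow_meas[OF QK] sQ(1)] Suc.prems(2)])
       (use sQ(2) Suc.prems(1) in auto)
  finally show ?case .
qed

theorem mainTheorem2:
  fixes M :: "'a measure" and P :: "'a \<Rightarrow> 'a measure"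
    and \<phi> :: "'a measure" and \<tau> :: "nat pmf" and C :: "'a set"
  assumes kernel: "P \<in> M \<rightarrow>\<^sub>M prob_algebra M"
    and irred: "phi_irreducible M P \<phi>"
    and aper: "aperiodic M P"
    and nondeg: "pmf \<tau> 0 < 1"
    and small: "small_set M P C"
  shows "petite_set M (sampled_kernel M P \<tau>) C"
proof -
  let ?Q = "sampled_kernel M P \<tau>"
  have K: "P \<in> M \<rightarrow>\<^sub>M subprob_algebra M" using kernel by (rule measurable_prob_algebraD)
  obtain k0 where k0: "k0 \<noteq> 0" "pmf \<tau> k0 > 0"
  proof (rule ccontr)
    assume "\<not> thesis"
    then have "\<forall>k. k \<noteq> 0 \<longrightarrow> pmf \<tau> k = 0" using that pmf_nonneg[of \<tau>]
      by (metis less_eq_real_def)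
    then have "set_pmf \<tau> \<subseteq> {0}" by (auto simp: set_pmf_eq)
    then have "\<tau> = return_pmf 0" by (simp add: set_pmf_subset_singleton)
    then show False using nondeg by simp
  qed
  from small obtain m :: nat and \<delta> :: real and \<nu> where
    Cs: "C \<in> sets M" and m: "m \<ge> 1" and d: "0 < \<delta>" and sn: "sets \<nu> = sets M"
    and nupos: "emeasure \<nu> (space M) > 0"
    and sm: "\<And>x B. x \<in> C \<Longrightarrow> B \<in> sets M \<Longrightarrow> emeasure (kpow M P m x) B \<ge> ennreal \<delta> * emeasure \<nu> B"
    unfolding small_set_def by blast
  have spn: "space \<nu> = space M" by (rule sets_eq_imp_space_eq[OF sn])
  have ne: "space M \<noteq> {}" using nupos by (auto simp: emeasure_empty)
  have CM: "C \<subseteq> space M" using Cs by (rule sets.sets_into_space)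
  define r where "r = m * k0 - m"
  have mr: "m * k0 = m + r" using k0(1) unfolding r_def by (cases k0) auto
  let ?N = "\<nu> \<bind> kpow M P r"
  have Nmeas: "kpow M P r \<in> \<nu> \<rightarrow>\<^sub>M subprob_algebra M"
    by (rule meas_sets[OF kpow_meas[OF K] sn])
  have Nem: "emeasure ?N B = (\<integral>\<^sup>+y. emeasure (kpow M P r y) B \<partial>\<nu>)" if "B \<in> sets M" for B
    by (rule emeasure_bind[OF _ Nmeas that]) (use spn ne in auto)
  have sN: "sets ?N = sets M"
    by (rule sets_bind) (use kernel_sets(1)[OF kpow_meas[OF K]] spn ne in auto)
  have step: "ennreal \<delta> * emeasure ?N B \<le> emeasure (kpow M P (m * k0) x) B"
    if x: "x \<in> C" and B: "B \<in> sets M" for x B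
  proof -
    have xM: "x \<in> space M" using x CM by auto
    have sP: "sets (kpow M P m x) = sets M" "space (kpow M P m x) = space M"
      using kernel_sets[OF kpow_meas[OF K] xM] by auto
    have e: "(\<lambda>y. emeasure (kpow M P r y) B) \<in> borel_measurable M"
      by (rule measurable_compose[OF kpow_meas[OF K] measurable_emeasure_subprob_algebra[OF B]])
    have "ennreal \<delta> * emeasure ?N B = ennreal \<delta> * (\<integral>\<^sup>+y. emeasure (kpow M P r y) B \<partial>\<nu>)"
      using Nem[OF B] by simp
    also have "\<dots> \<le> (\<integral>\<^sup>+y. emeasure (kpow M P r y) B \<partial>kpow M P m x)"
      by (rule int_mono[OF _ _ meas_sets[OF e sn]]) (use sP sn sm[OF x] in auto)
    also have "\<dots> = emeasure (kpow M P m x \<bind> kpow M P r) B"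
      by (rule emeasure_bind[symmetric, OF _ meas_sets[OF kpow_meas[OF K] sP(1)] B])
         (use sP(2) xM in auto)
    also have "\<dots> = emeasure (kpow M P (m * k0) x) B"
      unfolding mr using kpow_add[OF K xM, of m r] by simp
    finally show ?thesis .
  qed
  let ?c = "ennreal (pmf \<tau> k0) ^ m * ennreal \<delta>"
  define \<kappa> where "\<kappa> = scale_measure ?c ?N"
  have sk: "sets \<kappa> = sets M" unfolding \<kappa>_def using sN by simp
  have "emeasure ?N (space M) = (\<integral>\<^sup>+y. 1 \<partial>\<nu>)"
    unfolding Nem[OF sets.top]
    by (rule nn_integral_cong) (use kpow_prob[OF kernel] spn in auto)
  also have "\<dots> = emeasure \<nu> (space M)" using spn by simp
  finally have Nsp: "emeasure ?N (space M) > 0" using nupos by simp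
  have "ennreal (pmf \<tau> k0) ^ m = ennreal (pmf \<tau> k0 ^ m)" by (simp add: ennreal_power)
  moreover have "pmf \<tau> k0 ^ m > 0" using k0(2) by simp
  ultimately have cpos: "?c > 0" using d by (simp add: ennreal_zero_less_mult_iff)
  have kpos: "emeasure \<kappa> (space M) > 0"
    unfolding \<kappa>_def using cpos Nsp by (simp add: ennreal_zero_less_mult_iff)
  have main: "emeasure \<kappa> B \<le> (\<Sum>n. ennreal (pmf (return_pmf m) n) * emeasure (kpow M ?Q n x) B)"
    if x: "x \<in> C" and B: "B \<in> sets M" for x B
  proof -
    have xM: "x \<in> space M" using x CM by auto
    have "emeasure \<kappa> B = ennreal (pmf \<tau> k0) ^ m * (ennreal \<delta> * emeasure ?N B)"
      unfolding \<kappa>_def by (simp add: mult.assoc)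
    also have "\<dots> \<le> ennreal (pmf \<tau> k0) ^ m * emeasure (kpow M P (m * k0) x) B"
      by (rule mult_left_mono[OF step[OF x B]]) simp
    also have "\<dots> \<le> emeasure (kpow M ?Q m x) B"
      by (rule iter_ge[OF K xM B])
    also have "\<dots> = (\<Sum>n\<in>{m}. ennreal (pmf (return_pmf m) n) * emeasure (kpow M ?Q n x) B)"
      by simp
    also have "\<dots> \<le> (\<Sum>n. ennreal (pmf (return_pmf m) n) * emeasure (kpow M ?Q n x) B)"
      by (rule sum_le_suminf) (auto intro: summableI)
    finally show ?thesis .
  qed
  show ?thesis
    unfolding petite_set_def using Cs sk kpos main by blast
qed

end
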